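(* Let $F$ be the semigroup freely generated by four idempotent elements $x_{00},x_{01},x_{10},x_{11}$ (i.e. $\langle x_{00},x_{01},x_{10},x_{11}\mid x_{ij}^2=x_{ij}\rangle$ in semigroups), and $G$ the semigroup freely generated by three idempotents $x_\lambda,x_\mu,x_\rho$. Let $h_1,h_2,h_3:F\to G$ be the homomorphisms given by $h_1:(x_{00},x_{01},x_{10},x_{11})\mapsto(x_\lambda,x_\mu,x_\rho,x_\rho)$, $h_2:(x_{00},x_{01},x_{10},x_{11})\mapsto(x_\lambda,x_\lambda,x_\mu,x_\rho)$, $h_3:(x_{00},x_{01},x_{10},x_{11})\mapsto(x_\lambda,x_\mu,x_\mu,x_\rho)$, and let $|R|\subseteq F$ be the subsemigroup of elements on which $h_1,h_2,h_3$ all agree. For $i\in\omega$ put $p_i=(x_{00}x_{01})^{i+1}(x_{10}x_{01})^i(x_{10}x_{11})^{i+1}$ and $q_i=(x_{11}x_{10})^{i+1}(x_{01}x_{10})^i(x_{01}x_{00})^{i+1}$ (where a zeroth power means the factor is omitted). Then $|R|$ is generated by $x_{00},x_{11},p_i,q_i$ ($i\in\omega$) and has the presentation $$\langle x_{00},x_{11},p_i,q_i\ (i\in\omega)\mid x_{00}^2=x_{00},\ x_{11}^2=x_{11},\ x_{00}p_i=p_i=p_ix_{11},\ x_{11}q_i=q_i=q_ix_{00}\rangle.$$ It has a normal form consisting of all nonempty words in these generators containing no subword $x_{00}^2$, $x_{11}^2$, $x_{00}p_i$, $p_ix_{11}$, $x_{11}q_i$, or $q_ix_{00}$.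
   Context: Semigroups are sets with an associative binary operation (no identity element assumed). *)

theory Defs
  imports Main
begin

text \<open>Semigroup presentations, rendered concretely: elements of the semigroup
  presented by generators of type 'a and relations Rel are nonempty words
  (lists) over 'a, and two words denote the same element iff they are related by
  the congruence generated by Rel (pres_eq Rel). Multiplication is concatenation.\<close>

inductive pres_eq :: "('a list \<times> 'a list) set \<Rightarrow> 'a list \<Rightarrow> 'a list \<Rightarrow> bool"
  for Rel :: "('a list \<times> 'a list) set" where
  pres_refl: "pres_eq Rel w w"
| pres_sym: "pres_eq Rel w v \<Longrightarrow> pres_eq Rel v w"
| pres_trans: "pres_eq Rel u v \<Longrightarrow> pres_eq Rel v w \<Longrightarrow> pres_eq Rel u w"
| pres_step: "(l, r) \<in> Rel \<Longrightarrow> pres_eq Rel (u @ l @ v) (u @ r @ v)"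

definition idem_rels :: "('a list \<times> 'a list) set" where
  "idem_rels = {([a, a], [a]) | a. True}"

datatype X4 = X00 | X01 | X10 | X11
datatype X3 = XL | XM | XR

abbreviation F_eq :: "X4 list \<Rightarrow> X4 list \<Rightarrow> bool" where
  "F_eq \<equiv> pres_eq idem_rels"

abbreviation G_eq :: "X3 list \<Rightarrow> X3 list \<Rightarrow> bool" where
  "G_eq \<equiv> pres_eq idem_rels"

fun h1 :: "X4 \<Rightarrow> X3" where
  "h1 X00 = XL" | "h1 X01 = XM" | "h1 X10 = XR" | "h1 X11 = XR"
fun h2 :: "X4 \<Rightarrow> X3" where
  "h2 X00 = XL" | "h2 X01 = XL" | "h2 X10 = XM" | "h2 X11 = XR"
fun h3 :: "X4 \<Rightarrow> X3" where
  "h3 X00 = XL" | "h3 X01 = XM" | "h3 X10 = XM" | "h3 X11 = XR"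

definition R_set :: "X4 list set" where
  "R_set = {w. w \<noteq> [] \<and> G_eq (map h1 w) (map h2 w) \<and> G_eq (map h2 w) (map h3 w)}"

definition pw :: "nat \<Rightarrow> X4 list" where
  "pw i = concat (replicate (i + 1) [X00, X01]) @ concat (replicate i [X10, X01])
          @ concat (replicate (i + 1) [X10, X11])"

definition qw :: "nat \<Rightarrow> X4 list" where
  "qw i = concat (replicate (i + 1) [X11, X10]) @ concat (replicate i [X01, X10])
          @ concat (replicate (i + 1) [X01, X00])"

datatype Y = A | B | P nat | Q nat

fun gen :: "Y \<Rightarrow> X4 list" where
  "gen A = [X00]" | "gen B = [X11]" | "gen (P i) = pw i" | "gen (Q i) = qw i"

definition evalY :: "Y list \<Rightarrow> X4 list" where
  "evalY u = concat (map gen u)"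

definition R_rels :: "(Y list \<times> Y list) set" where
  "R_rels = {([A, A], [A]), ([B, B], [B])}
     \<union> {([A, P i], [P i]) | i. True} \<union> {([P i, B], [P i]) | i. True}
     \<union> {([B, Q i], [Q i]) | i. True} \<union> {([Q i, A], [Q i]) | i. True}"

definition nf :: "Y list \<Rightarrow> bool" where
  "nf w \<longleftrightarrow> w \<noteq> [] \<and>
     \<not> (\<exists>u v i. w = u @ [A, A] @ v \<or> w = u @ [B, B] @ v \<or> w = u @ [A, P i] @ v
               \<or> w = u @ [P i, B] @ v \<or> w = u @ [B, Q i] @ v \<or> w = u @ [Q i, A] @ v)"

end

theory Submission
  imports Defs
begin


abbreviation rd where "rd \<equiv> remdups_adj"

lemma pe_cong: "pres_eq R x y \<Longrightarrow> pres_eq R (u @ x @ v) (u @ y @ v)"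
proof (induction rule: pres_eq.induct)
  case (pres_refl w) then show ?case by (rule pres_eq.pres_refl)
next
  case (pres_sym w v) then show ?case by (metis pres_eq.pres_sym)
next
  case (pres_trans a b c) then show ?case by (metis pres_eq.pres_trans)
next
  case (pres_step l r u' v')
  from pres_eq.pres_step[OF pres_step, of "u @ u'" "v' @ v"] show ?case by simp
qed

lemma pe_map: "pres_eq idem_rels x y \<Longrightarrow> pres_eq idem_rels (map h x) (map h y)"
proof (induction rule: pres_eq.induct)
  case (pres_refl w) then show ?case by (rule pres_eq.pres_refl)
next
  case (pres_sym w v) then show ?case by (metis pres_eq.pres_sym)
next
  case (pres_trans a b c) then show ?case by (metis pres_eq.pres_trans)
next
  case (pres_step l r u' v')
  then obtain a where "l = [a,a]" "r = [a]" by (auto simp: idem_rels_def)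
  moreover have "([h a, h a], [h a]) \<in> idem_rels" by (auto simp: idem_rels_def)
  ultimately show ?case using pres_eq.pres_step[of "[h a, h a]" "[h a]" idem_rels "map h u'" "map h v'"] by simp
qed

lemma pe_rd: "pres_eq idem_rels x y \<Longrightarrow> rd x = rd y"
proof (induction rule: pres_eq.induct)
  case (pres_step l r u v)
  then obtain a where "l = [a,a]" "r = [a]" by (auto simp: idem_rels_def)
  then show ?case using remdups_adj_append[of u a "a # v"] remdups_adj_append[of u a v] by simp
qed auto

lemma rd_pe: "pres_eq idem_rels x (rd x)"
proof (induction x rule: remdups_adj.induct)
  case 1 then show ?case by (simp add: pres_refl)
next
  case (2 x) then show ?case by (simp add: pres_refl)
next
  case (3 x y xs)
  show ?case
  proof (cases "x = y")
    case True
    have "pres_eq idem_rels ([] @ [x,x] @ xs) ([] @ [x] @ xs)"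
      by (rule pres_step) (auto simp: idem_rels_def)
    then show ?thesis using 3 True by (auto intro: pres_trans)
  next
    case False
    then show ?thesis using 3 pe_cong[of idem_rels "y # xs" "rd (y # xs)" "[x]" "[]"] by simp
  qed
qed

lemma pe_iff: "pres_eq idem_rels x y \<longleftrightarrow> rd x = rd y"
  by (metis pe_rd rd_pe pres_sym pres_trans)

lemma rd_app_cong: "rd x = rd x' \<Longrightarrow> rd y = rd y' \<Longrightarrow> rd (x @ y) = rd (x' @ y')"
proof -
  assume "rd x = rd x'" "rd y = rd y'"
  then have "pres_eq idem_rels x x'" "pres_eq idem_rels y y'" by (simp_all add: pe_iff)
  then have "pres_eq idem_rels (x @ y) (x' @ y)" "pres_eq idem_rels (x' @ y) (x' @ y')"
    using pe_cong[of _ x x' "[]" y] pe_cong[of _ y y' x' "[]"] by auto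
  then show ?thesis by (metis pe_iff)
qed

lemma rd_map_cong: "rd x = rd y \<Longrightarrow> rd (map h x) = rd (map h y)"
  by (metis pe_iff pe_map)

lemma R_set_iff: "w \<in> R_set \<longleftrightarrow> w \<noteq> [] \<and> rd (map h1 w) = rd (map h2 w) \<and> rd (map h2 w) = rd (map h3 w)"
  by (simp add: R_set_def pe_iff)


fun alt :: "'a \<Rightarrow> 'a \<Rightarrow> nat \<Rightarrow> 'a list" where
  "alt x y 0 = []" | "alt x y (Suc n) = x # alt y x n"

lemma length_alt[simp]: "length (alt x y n) = n"
  by (induction n arbitrary: x y) auto

lemma nth_alt: "i < n \<Longrightarrow> alt x y n ! i = (if even i then x else y)"
  by (induction n arbitrary: x y i) (auto simp: nth_Cons split: nat.splits)

lemma map_alt[simp]: "map h (alt x y n) = alt (h x) (h y) n"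
  by (induction n arbitrary: x y) auto

lemma alt_same[simp]: "alt x x n = replicate n x"
  by (induction n) auto

lemma alt_Nil_iff[simp]: "alt x y n = [] \<longleftrightarrow> n = 0"
  by (cases n) auto

lemma hd_alt[simp]: "0 < n \<Longrightarrow> hd (alt x y n) = x"
  by (cases n) auto

lemma last_alt: "0 < n \<Longrightarrow> last (alt x y n) = (if odd n then x else y)"
proof (induction n arbitrary: x y)
  case (Suc n) then show ?case by (cases n) auto
qed simp

lemma alt_add: "alt x y (m + n) = alt x y m @ (if even m then alt x y n else alt y x n)"
  by (induction m arbitrary: x y) auto

lemma distinct_adj_alt: "x \<noteq> y \<Longrightarrow> distinct_adj (alt x y n)"
  by (induction n arbitrary: x y) (auto simp: distinct_adj_Cons)

lemma rd_alt[simp]: "x \<noteq> y \<Longrightarrow> rd (alt x y n) = alt x y n"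
  using distinct_adj_alt distinct_adj_altdef by metis

lemma dropWhile_alt[simp]: "x \<noteq> z \<Longrightarrow> dropWhile (\<lambda>y. y = z) (alt x y n) = alt x y n"
  by (cases n) auto

lemma concat_rep: "concat (replicate k [x, y]) = alt x y (2 * k)"
  by (induction k) auto

lemma alt_snoc_even: "even m \<Longrightarrow> alt x y m @ [x] = alt x y (Suc m)"
  using alt_add[of x y m 1] by simp

lemma pw_alt: "pw i = alt X00 X01 (2*i+2) @ alt X10 X01 (2*i+1) @ alt X11 X10 (2*i+1)"
proof -
  have 1: "concat (replicate (i+1) [X10, X11]) = X10 # alt X11 X10 (2*i+1)"
    by (simp add: concat_rep)
  have 2: "alt X10 X01 (2*i) @ [X10] = alt X10 X01 (2*i+1)"
    by (simp add: alt_snoc_even)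
  have "pw i = alt X00 X01 (2*(i+1)) @ alt X10 X01 (2*i) @ X10 # alt X11 X10 (2*i+1)"
    unfolding pw_def 1 by (simp only: concat_rep)
  also have "\<dots> = alt X00 X01 (2*i+2) @ (alt X10 X01 (2*i) @ [X10]) @ alt X11 X10 (2*i+1)"
    by simp
  finally show ?thesis unfolding 2 .
qed

lemma qw_alt: "qw i = alt X11 X10 (2*i+2) @ alt X01 X10 (2*i+1) @ alt X00 X01 (2*i+1)"
proof -
  have 1: "concat (replicate (i+1) [X01, X00]) = X01 # alt X00 X01 (2*i+1)"
    by (simp add: concat_rep)
  have 2: "alt X01 X10 (2*i) @ [X01] = alt X01 X10 (2*i+1)"
    by (simp add: alt_snoc_even)
  have "qw i = alt X11 X10 (2*(i+1)) @ alt X01 X10 (2*i) @ X01 # alt X00 X01 (2*i+1)"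
    unfolding qw_def 1 by (simp only: concat_rep)
  also have "\<dots> = alt X11 X10 (2*i+2) @ (alt X01 X10 (2*i) @ [X01]) @ alt X00 X01 (2*i+1)"
    by simp
  finally show ?thesis unfolding 2 .
qed


declare alt.simps(2)[simp del]

lemma rd_app: "xs \<noteq> [] \<Longrightarrow> rd (xs @ ys) = rd xs @ rd (dropWhile (\<lambda>y. y = last xs) ys)"
  by (rule remdups_adj_append'')

lemma dropWhile_rep[simp]: "dropWhile (\<lambda>y. y = z) (replicate n z) = []"
  by (induction n) auto

lemma dropWhile_rep_app[simp]: "dropWhile (\<lambda>y. y = z) (replicate n z @ ys) = dropWhile (\<lambda>y. y = z) ys"
  by (induction n) auto

lemma rd_absorb_mid: "xs \<noteq> [] \<Longrightarrow> z = last xs \<Longrightarrow> rd (xs @ replicate n z @ ys) = rd (xs @ ys)"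
  by (simp add: rd_app)

lemma rd_absorb_end: "xs \<noteq> [] \<Longrightarrow> z = last xs \<Longrightarrow> rd (xs @ replicate n z) = rd xs"
  using rd_absorb_mid[of xs z n "[]"] by simp

lemma rd_rep_front: "0 < n \<Longrightarrow> rd (replicate n z @ ys) = rd (z # ys)"
proof (induction n)
  case (Suc n) then show ?case by (cases n) auto
qed simp

lemma rd_app_ne: "xs = [] \<or> ys = [] \<or> last xs \<noteq> hd ys \<Longrightarrow> rd (xs @ ys) = rd xs @ rd ys"
  by (rule remdups_adj_append')

lemma alt_Cons: "x # alt y x n = alt x y (Suc n)" by (simp add: alt.simps(2))

definition ZP :: "nat \<Rightarrow> X3 list" where "ZP i = alt XL XM (2*i+2) @ alt XR XM (2*i+1)"

lemma last_alt_even: "last (alt x y (2*i+2)) = y" by (simp add: last_alt)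
lemma last_alt_odd: "last (alt x y (2*i+1)) = x" by (simp add: last_alt)

lemma rd_h1_pw: "rd (map h1 (pw i)) = ZP i"
proof -
  have "rd (map h1 (pw i)) = rd ((alt XL XM (2*i+2) @ alt XR XM (2*i+1)) @ replicate (2*i+1) XR)"
    unfolding pw_alt by simp
  also have "\<dots> = rd (alt XL XM (2*i+2) @ alt XR XM (2*i+1))"
    by (rule rd_absorb_end) (auto simp: last_alt)
  also have "\<dots> = ZP i" unfolding ZP_def
    by (subst rd_app_ne) (auto simp: last_alt)
  finally show ?thesis .
qed

lemma rd_h2_pw: "rd (map h2 (pw i)) = ZP i"
proof -
  have "rd (map h2 (pw i)) = rd (replicate (2*i+2) XL @ alt XM XL (2*i+1) @ alt XR XM (2*i+1))"
    unfolding pw_alt by simp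
  also have "\<dots> = rd (XL # alt XM XL (2*i+1) @ alt XR XM (2*i+1))"
    by (rule rd_rep_front) simp
  also have "\<dots> = rd (alt XL XM (2*i+2) @ alt XR XM (2*i+1))"
    by (simp only: append_Cons[symmetric] alt_Cons) simp
  also have "\<dots> = ZP i" unfolding ZP_def
    by (subst rd_app_ne) (auto simp: last_alt)
  finally show ?thesis .
qed

lemma rd_h3_pw: "rd (map h3 (pw i)) = ZP i"
proof -
  have "rd (map h3 (pw i)) = rd (alt XL XM (2*i+2) @ replicate (2*i+1) XM @ alt XR XM (2*i+1))"
    unfolding pw_alt by simp
  also have "\<dots> = rd (alt XL XM (2*i+2) @ alt XR XM (2*i+1))"
    by (rule rd_absorb_mid) (auto simp: last_alt)
  also have "\<dots> = ZP i" unfolding ZP_def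
    by (subst rd_app_ne) (auto simp: last_alt)
  finally show ?thesis .
qed


fun sg :: "X4 \<Rightarrow> X4" where
  "sg X00 = X11" | "sg X01 = X10" | "sg X10 = X01" | "sg X11 = X00"
fun tg :: "X3 \<Rightarrow> X3" where
  "tg XL = XR" | "tg XM = XM" | "tg XR = XL"

lemma sg_sg[simp]: "sg (sg x) = x" by (cases x) auto
lemma tg_tg[simp]: "tg (tg x) = x" by (cases x) auto
lemma inj_tg: "inj tg" by (metis injI tg_tg)
lemma h1_sg: "h1 (sg x) = tg (h2 x)" by (cases x) auto
lemma h2_sg: "h2 (sg x) = tg (h1 x)" by (cases x) auto
lemma h3_sg: "h3 (sg x) = tg (h3 x)" by (cases x) auto
lemma map_sg_sg[simp]: "map sg (map sg w) = w" by (induction w) auto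

lemma rd_tg: "rd (map tg w) = map tg (rd w)"
  by (rule remdups_adj_map_injective[OF inj_tg])

lemma map_h_sg: "map h1 (map sg w) = map tg (map h2 w)" "map h2 (map sg w) = map tg (map h1 w)"
  "map h3 (map sg w) = map tg (map h3 w)"
  by (induction w) (auto simp: h1_sg h2_sg h3_sg)

lemma R_sym: "w \<in> R_set \<Longrightarrow> map sg w \<in> R_set"
  unfolding R_set_iff map_h_sg rd_tg by simp

lemma sg_pw: "map sg (pw i) = qw i"
  unfolding pw_alt qw_alt by simp

lemma pw_R: "pw i \<in> R_set"
  unfolding R_set_iff rd_h1_pw rd_h2_pw rd_h3_pw by (simp add: pw_alt)

lemma qw_R: "qw i \<in> R_set"
  using R_sym[OF pw_R] sg_pw by simp

lemma gen_R: "gen g \<in> R_set"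
  by (cases g) (simp_all add: pw_R qw_R, simp_all add: R_set_iff)

lemma R_app: "x \<in> R_set \<Longrightarrow> y \<in> R_set \<Longrightarrow> x @ y \<in> R_set"
  unfolding R_set_iff by (auto intro: rd_app_cong)

lemma evalY_Cons: "evalY (g # u) = gen g @ evalY u" by (simp add: evalY_def)
lemma evalY_app: "evalY (u @ v) = evalY u @ evalY v" by (simp add: evalY_def)
lemma evalY_Nil[simp]: "evalY [] = []" by (simp add: evalY_def)

lemma part1: "u \<noteq> [] \<Longrightarrow> evalY u \<in> R_set"
proof (induction u)
  case (Cons g u)
  then show ?case by (cases "u = []") (auto simp: evalY_Cons gen_R R_app)
qed simp


fun bad :: "Y \<Rightarrow> Y \<Rightarrow> bool" where
  "bad A A = True" | "bad A (P i) = True" | "bad B B = True" | "bad B (Q i) = True"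
| "bad (P i) B = True" | "bad (Q i) A = True" | "bad _ _ = False"

fun goodadj :: "Y list \<Rightarrow> bool" where
  "goodadj (x # y # zs) = (\<not> bad x y \<and> goodadj (y # zs))" | "goodadj _ = True"

lemma ex_bad: "(\<exists>u v x y. w = u @ [x,y] @ v \<and> bad x y) \<longleftrightarrow> \<not> goodadj w"
proof (induction w rule: goodadj.induct)
  case (1 x y zs)
  have "(\<exists>u v a b. x # y # zs = u @ [a,b] @ v \<and> bad a b) \<longleftrightarrow>
        bad x y \<or> (\<exists>u v a b. y # zs = u @ [a,b] @ v \<and> bad a b)"
  proof
    assume "\<exists>u v a b. x # y # zs = u @ [a,b] @ v \<and> bad a b"
    then obtain u v a b where e: "x # y # zs = u @ [a,b] @ v" "bad a b" by blast
    show "bad x y \<or> (\<exists>u v a b. y # zs = u @ [a,b] @ v \<and> bad a b)"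
    proof (cases u)
      case Nil then show ?thesis using e by auto
    next
      case (Cons c u') then show ?thesis using e by auto
    qed
  next
    assume "bad x y \<or> (\<exists>u v a b. y # zs = u @ [a,b] @ v \<and> bad a b)"
    then show "\<exists>u v a b. x # y # zs = u @ [a,b] @ v \<and> bad a b"
    proof
      assume "bad x y" then show ?thesis by (rule_tac x="[]" in exI) auto
    next
      assume "\<exists>u v a b. y # zs = u @ [a,b] @ v \<and> bad a b"
      then obtain u v a b where "y # zs = u @ [a,b] @ v" "bad a b" by blast
      then show ?thesis by (rule_tac x="x # u" in exI) auto
    qed
  qed
  then show ?case using 1 by simp
next
  case "2_1" then show ?case by simp
next
  case ("2_2" v) then show ?case by (auto simp: Cons_eq_append_conv)
qed

lemma bad_iff: "bad x y \<longleftrightarrow> (\<exists>i. (x = A \<and> y = A) \<or> (x = B \<and> y = B) \<or> (x = A \<and> y = P i) \<or> (x = P i \<and> y = B)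
   \<or> (x = B \<and> y = Q i) \<or> (x = Q i \<and> y = A))"
  by (cases x; cases y) auto

lemma nf_iff: "nf w \<longleftrightarrow> w \<noteq> [] \<and> goodadj w"
proof -
  have "(\<exists>u v i. w = u @ [A, A] @ v \<or> w = u @ [B, B] @ v \<or> w = u @ [A, P i] @ v
               \<or> w = u @ [P i, B] @ v \<or> w = u @ [B, Q i] @ v \<or> w = u @ [Q i, A] @ v)
        \<longleftrightarrow> (\<exists>u v x y. w = u @ [x,y] @ v \<and> bad x y)"
    unfolding bad_iff by blast
  then show ?thesis unfolding nf_def ex_bad by blast
qed

fun push :: "Y \<Rightarrow> Y list \<Rightarrow> Y list" where
  "push y [] = [y]"
| "push y (z # zs) = (if bad y z then (case y of P _ \<Rightarrow> y # zs | Q _ \<Rightarrow> y # zs | _ \<Rightarrow> z # zs) else y # z # zs)"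

definition norm :: "Y list \<Rightarrow> Y list" where "norm u = foldr push u []"

lemma rel_pe: "(l, r) \<in> R_rels \<Longrightarrow> pres_eq R_rels (l @ v) (r @ v)"
  using pres_step[of l r R_rels "[]" v] by simp

lemma rel_pe2: "([x,y],[w]) \<in> R_rels \<Longrightarrow> pres_eq R_rels (x # y # v) (w # v)"
  using rel_pe[of "[x,y]" "[w]" v] by simp

lemma push_pe: "pres_eq R_rels (y # s) (push y s)"
proof (cases s)
  case Nil then show ?thesis by (simp add: pres_refl)
next
  case (Cons z zs)
  show ?thesis
  proof (cases "bad y z")
    case True
    then show ?thesis using Cons
      by (cases y; cases z) (auto intro!: rel_pe2 simp del: R_rels_def, auto simp: R_rels_def)
  qed (simp add: Cons pres_refl)
qed

lemma norm_Cons: "norm (y # u) = push y (norm u)" by (simp add: norm_def)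
lemma norm_Nil[simp]: "norm [] = []" by (simp add: norm_def)

lemma norm_pe: "pres_eq R_rels u (norm u)"
proof (induction u)
  case Nil then show ?case by (simp add: pres_refl)
next
  case (Cons y u)
  have "pres_eq R_rels ([y] @ u @ []) ([y] @ norm u @ [])" by (rule pe_cong[OF Cons])
  then show ?case using push_pe[of y "norm u"] by (auto simp: norm_Cons intro: pres_trans)
qed

lemma push_good: "goodadj s \<Longrightarrow> goodadj (push y s)"
proof (cases s)
  case (Cons z zs)
  assume g: "goodadj s"
  show ?thesis
  proof (cases "bad y z")
    case True
    then show ?thesis using g Cons
      by (cases zs; cases y; cases z; cases "hd zs") auto
  qed (use g Cons in simp)
qed simp

lemma push_ne: "push y s \<noteq> []" by (cases s) (auto split: Y.splits)

lemma norm_good: "goodadj (norm u)"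
  by (induction u) (auto simp: norm_Cons push_good)

lemma norm_nf: "u \<noteq> [] \<Longrightarrow> nf (norm u)"
proof -
  assume "u \<noteq> []"
  then obtain a l where "u = a # l" by (cases u) auto
  then show ?thesis using norm_good[of u] by (simp add: nf_iff norm_Cons push_ne)
qed

lemma norm_id: "goodadj v \<Longrightarrow> norm v = v"
proof (induction v)
  case (Cons y v)
  then have "goodadj v" by (cases v) auto
  with Cons have "norm v = v" by simp
  then show ?case using Cons.prems by (cases v) (auto simp: norm_Cons)
qed simp

lemma push_rel: "(l, r) \<in> R_rels \<Longrightarrow> foldr push l s = foldr push r s"
  unfolding R_rels_def
  by (cases s; auto; case_tac "hd s"; auto split: Y.splits)

lemma pe_norm: "pres_eq R_rels u v \<Longrightarrow> norm u = norm v"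
proof (induction rule: pres_eq.induct)
  case (pres_step l r u v)
  then show ?case by (simp add: norm_def push_rel)
qed auto

lemma part4: "u \<noteq> [] \<Longrightarrow> \<exists>!v. nf v \<and> pres_eq R_rels u v"
proof
  assume "u \<noteq> []"
  then show "nf (norm u) \<and> pres_eq R_rels u (norm u)" by (simp add: norm_nf norm_pe)
next
  fix v assume "nf v \<and> pres_eq R_rels u v"
  then have "norm u = norm v" "goodadj v" by (auto simp: pe_norm nf_iff)
  then show "v = norm u" by (simp add: norm_id)
qed


lemma pw_ne[simp]: "pw i \<noteq> []" by (simp add: pw_alt)
lemma qw_ne[simp]: "qw i \<noteq> []" by (simp add: qw_alt)

lemma pw_start: "\<exists>t. pw i = X00 # X01 # t"
  unfolding pw_alt by (simp add: alt.simps(2) numeral_2_eq_2)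
lemma qw_start: "\<exists>t. qw i = X11 # X10 # t"
  using pw_start[of i] sg_pw[of i] by (metis list.simps(9) sg.simps(1,2))
lemma pw_last: "last (pw i) = X11"
  unfolding pw_alt by (simp add: last_alt)
lemma qw_last: "last (qw i) = X00"
  using pw_last[of i] sg_pw[of i] by (metis last_map pw_ne sg.simps(4))
lemma pw_end: "pw i = butlast (pw i) @ [X11]"
  using pw_last[of i] by (metis append_butlast_last_id pw_ne)
lemma qw_end: "qw i = butlast (qw i) @ [X00]"
  using qw_last[of i] by (metis append_butlast_last_id qw_ne)

lemma rd_pw: "rd (pw i) = pw i"
  unfolding pw_alt by (subst rd_app_ne, simp add: last_alt, subst rd_app_ne, auto simp: last_alt)
lemma rd_qw: "rd (qw i) = qw i"
proof -
  have "inj sg" by (metis injI sg_sg)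
  then show ?thesis using rd_pw[of i] sg_pw[of i] remdups_adj_map_injective by metis
qed

lemma rd_gen: "rd (gen g) = gen g" by (cases g) (auto simp: rd_pw rd_qw)

lemma rel_F: "(l, r) \<in> R_rels \<Longrightarrow> rd (evalY l) = rd (evalY r)"
proof -
  assume "(l, r) \<in> R_rels"
  then consider "l = [A,A]" "r = [A]" | "l = [B,B]" "r = [B]" | i where "l = [A, P i]" "r = [P i]"
    | i where "l = [P i, B]" "r = [P i]" | i where "l = [B, Q i]" "r = [Q i]"
    | i where "l = [Q i, A]" "r = [Q i]"
    unfolding R_rels_def by blast
  then show ?thesis
  proof cases
    case (3 i) then show ?thesis using pw_start[of i] by (auto simp: evalY_def)
  next
    case (4 i) then show ?thesis using pw_end[of i] rd_absorb_end[of "pw i" X11 1]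
      by (auto simp: evalY_def pw_last)
  next
    case (5 i) then show ?thesis using qw_start[of i] by (auto simp: evalY_def)
  next
    case (6 i) then show ?thesis using qw_end[of i] rd_absorb_end[of "qw i" X00 1]
      by (auto simp: evalY_def qw_last)
  qed (auto simp: evalY_def)
qed

lemma part3_rev: "pres_eq R_rels u v \<Longrightarrow> F_eq (evalY u) (evalY v)"
proof (induction rule: pres_eq.induct)
  case (pres_refl w) then show ?case by (simp add: pres_eq.pres_refl)
next
  case (pres_sym w v) then show ?case by (metis pres_eq.pres_sym)
next
  case (pres_trans a b c) then show ?case by (metis pres_eq.pres_trans)
next
  case (pres_step l r u v)
  then have "rd (evalY l) = rd (evalY r)" by (rule rel_F)
  then have "rd (evalY u @ evalY l @ evalY v) = rd (evalY u @ evalY r @ evalY v)"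
    by (intro rd_app_cong) auto
  then show ?case by (simp add: pe_iff evalY_app)
qed


lemma pw_nth_lt: "k < 2*i+2 \<Longrightarrow> pw i ! k = (if even k then X00 else X01)"
  unfolding pw_alt by (simp add: nth_append nth_alt)
lemma pw_nth_eq: "pw i ! (2*i+2) = X10"
  unfolding pw_alt by (simp add: nth_append nth_alt)
lemma length_pw: "length (pw i) = 6*i+4" unfolding pw_alt by simp

lemma pw_inj_lt: "i < j \<Longrightarrow> pw i @ x \<noteq> pw j @ y"
proof
  assume "i < j" "pw i @ x = pw j @ y"
  then have "(pw i @ x) ! (2*i+2) = (pw j @ y) ! (2*i+2)" by simp
  moreover have "(pw i @ x) ! (2*i+2) = X10" using pw_nth_eq[of i] by (simp add: nth_append length_pw)
  moreover have "(pw j @ y) ! (2*i+2) = X00" using pw_nth_lt[of "2*i+2" j] \<open>i < j\<close>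
    by (simp add: nth_append length_pw)
  ultimately show False by simp
qed

lemma pw_inj: "pw i @ x = pw j @ y \<Longrightarrow> i = j"
  by (metis linorder_neqE_nat pw_inj_lt)

lemma qw_inj: "qw i @ x = qw j @ y \<Longrightarrow> i = j"
proof -
  assume "qw i @ x = qw j @ y"
  then have "map sg (qw i @ x) = map sg (qw j @ y)" by simp
  then have "pw i @ map sg x = pw j @ map sg y" using sg_pw[of i] sg_pw[of j]
    by (metis map_append map_sg_sg)
  then show ?thesis by (rule pw_inj)
qed

definition T :: "Y \<Rightarrow> Y list \<Rightarrow> X4 list" where
  "T g s = tl (rd (last (gen g) # evalY s))"

lemma gen_ne[simp]: "gen g \<noteq> []" by (cases g) auto

lemma E_Cons: "rd (evalY (g # s)) = gen g @ T g s"
proof -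
  have "gen g = butlast (gen g) @ [last (gen g)]" by simp
  then have "rd (evalY (g # s)) = rd (butlast (gen g) @ last (gen g) # evalY s)"
    by (metis append_Cons append_assoc append_Nil evalY_Cons)
  also have "\<dots> = rd (gen g) @ tl (rd (last (gen g) # evalY s))"
    by (subst remdups_adj_append) (metis append_butlast_last_id gen_ne)
  finally show ?thesis by (simp add: T_def rd_gen)
qed

lemma T_Nil[simp]: "T g [] = []" by (simp add: T_def)

lemma evalY_ne: "s \<noteq> [] \<Longrightarrow> evalY s \<noteq> []"
  by (cases s) (auto simp: evalY_Cons)

lemma hd_evalY: "s \<noteq> [] \<Longrightarrow> hd (evalY s) = hd (gen (hd s))"
  by (cases s) (auto simp: evalY_Cons)

lemma T_nomerge: "s \<noteq> [] \<Longrightarrow> hd (gen (hd s)) \<noteq> last (gen g) \<Longrightarrow> T g s = rd (evalY s)"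
proof -
  assume a: "s \<noteq> []" "hd (gen (hd s)) \<noteq> last (gen g)"
  then obtain x xs where e: "evalY s = x # xs" "x \<noteq> last (gen g)"
    using evalY_ne hd_evalY by (metis list.collapse)
  then show ?thesis unfolding T_def e by simp
qed

lemma T_merge: "s \<noteq> [] \<Longrightarrow> hd (gen (hd s)) = last (gen g) \<Longrightarrow> T g s = tl (rd (evalY s))"
proof -
  assume a: "s \<noteq> []" "hd (gen (hd s)) = last (gen g)"
  then obtain xs where e: "evalY s = last (gen g) # xs"
    using evalY_ne hd_evalY by (metis list.collapse)
  then show ?thesis unfolding T_def e by simp
qed

lemma hd_pw: "hd (pw i) = X00" using pw_start[of i] by auto
lemma hd_qw: "hd (qw i) = X11" using qw_start[of i] by auto

lemma hd_gen: "hd (gen g) = (case g of A \<Rightarrow> X00 | P _ \<Rightarrow> X00 | _ \<Rightarrow> X11)"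
  by (cases g) (auto simp: hd_pw hd_qw)
lemma last_gen: "last (gen g) = (case g of A \<Rightarrow> X00 | Q _ \<Rightarrow> X00 | _ \<Rightarrow> X11)"
  by (cases g) (auto simp: pw_last qw_last)

lemma E_ne: "s \<noteq> [] \<Longrightarrow> rd (evalY s) \<noteq> []" by (simp add: evalY_ne)
lemma hd_E: "s \<noteq> [] \<Longrightarrow> hd (rd (evalY s)) = hd (gen (hd s))" by (simp add: hd_evalY)


declare hd_pw[simp] hd_qw[simp] pw_last[simp] qw_last[simp]

abbreviation E where "E s \<equiv> rd (evalY s)"

lemma goodadj_tl: "goodadj (g # s) \<Longrightarrow> goodadj s" by (cases s) auto

lemma hd_gen_cases: "hd (gen g) = X00 \<or> hd (gen g) = X11" by (cases g) (auto simp: hd_gen)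

lemma merge_PQ: "goodadj (g # h # r) \<Longrightarrow> hd (gen h) = last (gen g) \<Longrightarrow> \<exists>i. h = P i \<or> h = Q i"
  by (cases g; cases h) (auto simp: hd_gen last_gen)

lemma second_PQ: "h = P i \<or> h = Q i \<Longrightarrow> \<exists>x t. gen h = hd (gen h) # x # t \<and> (x = X01 \<or> x = X10)"
  using pw_start[of i] qw_start[of i] by auto

lemma tl_E_PQ: "h = P i \<or> h = Q i \<Longrightarrow> \<exists>x t. tl (E (h # r)) = x # t \<and> (x = X01 \<or> x = X10)"
proof -
  assume "h = P i \<or> h = Q i"
  from second_PQ[OF this] obtain x t where "gen h = hd (gen h) # x # t" "x = X01 \<or> x = X10" by blast
  then show ?thesis unfolding E_Cons by (metis append_Cons list.sel(3))
qed

lemma T_step: "goodadj (g # s) \<Longrightarrow> goodadj (g # t) \<Longrightarrow> T g s = T g t \<Longrightarrow>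
   s = t \<or> (s \<noteq> [] \<and> t \<noteq> [] \<and> E s = E t)"
proof -
  assume gs: "goodadj (g # s)" and gt: "goodadj (g # t)" and eq: "T g s = T g t"
  have key: "T g s' \<noteq> []" if ne: "s' \<noteq> []" and ga: "goodadj (g # s')" for s'
  proof -
    obtain h r where s': "s' = h # r" using ne by (cases s') auto
    show ?thesis
    proof (cases "hd (gen h) = last (gen g)")
      case True
      then obtain i where "h = P i \<or> h = Q i" using merge_PQ[of g h r] ga s' by auto
      from tl_E_PQ[OF this, of r] True s' show ?thesis by (auto simp: T_merge)
    next
      case False then show ?thesis using s' by (simp add: T_nomerge evalY_ne)
    qed
  qed
  have hdn: "hd (gen (hd s')) \<noteq> last (gen g) \<Longrightarrow> s' \<noteq> [] \<Longrightarrow> T g s' = E s' \<and> (hd (E s') = X00 \<or> hd (E s') = X11)" for s'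
    using T_nomerge hd_E hd_gen_cases by metis
  have hdm: "hd (gen (hd s')) = last (gen g) \<Longrightarrow> s' \<noteq> [] \<Longrightarrow> goodadj (g # s') \<Longrightarrow>
      T g s' = tl (E s') \<and> hd (E s') = last (gen g) \<and> (\<exists>x t. tl (E s') = x # t \<and> (x = X01 \<or> x = X10))" for s'
  proof -
    assume a: "hd (gen (hd s')) = last (gen g)" "s' \<noteq> []" "goodadj (g # s')"
    then obtain h r where s': "s' = h # r" by (cases s') auto
    then obtain i where "h = P i \<or> h = Q i" using merge_PQ[of g h r] a by auto
    then show ?thesis using tl_E_PQ[of h i r] a s' T_merge hd_E by auto
  qed
  show ?thesis
  proof (cases "s = []"; cases "t = []")
    assume "s = []" "t = []" then show ?thesis by simp
  next
    assume "s = []" "t \<noteq> []" then show ?thesis using key[of t] gt eq by simp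
  next
    assume "s \<noteq> []" "t = []" then show ?thesis using key[of s] gs eq by simp
  next
    assume ne: "s \<noteq> []" "t \<noteq> []"
    show ?thesis
    proof (cases "hd (gen (hd s)) = last (gen g)"; cases "hd (gen (hd t)) = last (gen g)")
      assume "hd (gen (hd s)) = last (gen g)" "hd (gen (hd t)) = last (gen g)"
      with hdm[of s] hdm[of t] ne gs gt eq have "tl (E s) = tl (E t)" "hd (E s) = hd (E t)" by auto
      then have "E s = E t" by (metis E_ne list.collapse ne(1) ne(2))
      then show ?thesis using ne by simp
    next
      assume "hd (gen (hd s)) = last (gen g)" "hd (gen (hd t)) \<noteq> last (gen g)"
      with hdn[of t] ne have 1: "T g t = E t" "hd (E t) = X00 \<or> hd (E t) = X11" by auto
      from hdm[of s] ne gs \<open>hd (gen (hd s)) = last (gen g)\<close> obtain x t0 where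
        2: "T g s = x # t0" "x = X01 \<or> x = X10" by metis
      from 1 2 eq have "E t = x # t0" by simp
      then have "hd (E t) = x" by (metis list.sel(1))
      with 1 2 show ?thesis by auto
    next
      assume "hd (gen (hd s)) \<noteq> last (gen g)" "hd (gen (hd t)) = last (gen g)"
      with hdn[of s] ne have 1: "T g s = E s" "hd (E s) = X00 \<or> hd (E s) = X11" by auto
      from hdm[of t] ne gt \<open>hd (gen (hd t)) = last (gen g)\<close> obtain x t0 where
        2: "T g t = x # t0" "x = X01 \<or> x = X10" by metis
      from 1 2 eq have "E s = x # t0" by simp
      then have "hd (E s) = x" by (metis list.sel(1))
      with 1 2 show ?thesis by auto
    next
      assume "hd (gen (hd s)) \<noteq> last (gen g)" "hd (gen (hd t)) \<noteq> last (gen g)"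
      with hdn[of s] hdn[of t] ne eq show ?thesis by auto
    qed
  qed
qed

lemma take2: "goodadj (g # s) \<Longrightarrow> take 2 (E (g # s)) = (case g of
    A \<Rightarrow> if s = [] then [X00] else [X00, X11]
  | B \<Rightarrow> if s = [] then [X11] else [X11, X00]
  | P _ \<Rightarrow> [X00, X01] | Q _ \<Rightarrow> [X11, X10])"
proof (cases g)
  case A
  assume gs: "goodadj (g # s)"
  show ?thesis
  proof (cases s)
    case (Cons h r)
    then have "hd (gen h) = X11" using gs A by (cases h) (auto simp: hd_gen)
    then have "T A s = E s" "hd (E s) = X11" using Cons T_nomerge[of s A] hd_E[of s] by auto
    moreover obtain l where "E s = X11 # l" using \<open>hd (E s) = X11\<close> E_ne[of s] Cons
      by (metis list.collapse list.simps(3))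
    ultimately show ?thesis using A Cons E_Cons[of A s] by (simp add: numeral_2_eq_2)
  qed (simp add: A E_Cons)
next
  case B
  assume gs: "goodadj (g # s)"
  show ?thesis
  proof (cases s)
    case (Cons h r)
    then have "hd (gen h) = X00" using gs B by (cases h) (auto simp: hd_gen)
    then have "T B s = E s" "hd (E s) = X00" using Cons T_nomerge[of s B] hd_E[of s] by auto
    moreover obtain l where "E s = X00 # l" using \<open>hd (E s) = X00\<close> E_ne[of s] Cons
      by (metis list.collapse list.simps(3))
    ultimately show ?thesis using B Cons E_Cons[of B s] by (simp add: numeral_2_eq_2)
  qed (simp add: B E_Cons)
next
  case (P i)
  then show ?thesis using pw_start[of i] by (auto simp: E_Cons numeral_2_eq_2)
next
  case (Q i)
  then show ?thesis using qw_start[of i] by (auto simp: E_Cons numeral_2_eq_2)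
qed

lemma E_inj: "goodadj s \<Longrightarrow> goodadj t \<Longrightarrow> s \<noteq> [] \<Longrightarrow> t \<noteq> [] \<Longrightarrow> E s = E t \<Longrightarrow> s = t"
proof (induction s arbitrary: t)
  case Nil then show ?case by simp
next
  case (Cons g s)
  obtain g' t' where t: "t = g' # t'" using Cons.prems by (cases t) auto
  have t2: "take 2 (E (g # s)) = take 2 (E (g' # t'))" using Cons.prems t by simp
  have gg: "g = g'"
  proof (cases g; cases g')
    fix i j assume "g = P i" "g' = P j"
    then have "pw i @ T g s = pw j @ T g' t'" using Cons.prems t by (simp add: E_Cons)
    then have "i = j" by (rule pw_inj)
    then show "g = g'" using \<open>g = P i\<close> \<open>g' = P j\<close> by simp
  next
    fix i j assume "g = Q i" "g' = Q j"
    then have "qw i @ T g s = qw j @ T g' t'" using Cons.prems t by (simp add: E_Cons)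
    then have "i = j" by (rule qw_inj)
    then show "g = g'" using \<open>g = Q i\<close> \<open>g' = Q j\<close> by simp
  qed (use t2 take2[OF Cons.prems(1)] take2[of g' t'] Cons.prems(2) t in \<open>simp_all split: if_splits\<close>)
  then have "T g s = T g t'" using Cons.prems t by (simp add: E_Cons)
  then have "s = t' \<or> (s \<noteq> [] \<and> t' \<noteq> [] \<and> E s = E t')"
    using T_step Cons.prems t gg by blast
  then have "s = t'" using Cons.IH Cons.prems t goodadj_tl by blast
  then show ?case using gg t by simp
qed


lemma rd_id: "distinct_adj xs \<Longrightarrow> rd xs = xs" by (simp add: distinct_adj_altdef)

lemma alt_tw: "distinct_adj u \<Longrightarrow> set u \<subseteq> {x,y} \<Longrightarrow> u \<noteq> [] \<Longrightarrow> hd u = x \<Longrightarrow> x \<noteq> y \<Longrightarrow> u = alt x y (length u)"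
proof (induction u arbitrary: x y)
  case (Cons a u)
  show ?case
  proof (cases u)
    case Nil then show ?thesis using Cons by (simp add: alt.simps(2))
  next
    case (Cons b u')
    with Cons.prems have "b = y" by (auto simp: distinct_adj_Cons)
    with Cons.prems Cons Cons.IH[of y x] have "u = alt y x (length u)" by (auto simp: distinct_adj_Cons)
    then show ?thesis using Cons.prems by (metis alt_Cons length_Cons list.sel(1))
  qed
qed simp

lemma split_alt: "distinct_adj w \<Longrightarrow> w \<noteq> [] \<Longrightarrow> hd w = x \<Longrightarrow> x \<noteq> y \<Longrightarrow>
  \<exists>k v. w = alt x y k @ v \<and> 0 < k \<and> (v = [] \<or> (hd v \<noteq> x \<and> hd v \<noteq> y))"
proof -
  assume a: "distinct_adj w" "w \<noteq> []" "hd w = x" "x \<noteq> y"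
  define u where "u = takeWhile (\<lambda>l. l \<in> {x,y}) w"
  define v where "v = dropWhile (\<lambda>l. l \<in> {x,y}) w"
  have wuv: "w = u @ v" by (simp add: u_def v_def)
  have u1: "u \<noteq> []" using a by (cases w) (auto simp: u_def)
  have u2: "hd u = x" using a by (cases w) (auto simp: u_def)
  have u3: "set u \<subseteq> {x,y}" unfolding u_def by (auto dest: set_takeWhileD)
  have u4: "distinct_adj u" using a(1) wuv by auto
  have ua: "u = alt x y (length u)" by (rule alt_tw[OF u4 u3 u1 u2 a(4)])
  have vv: "v = [] \<or> (hd v \<noteq> x \<and> hd v \<noteq> y)" unfolding v_def using hd_dropWhile[of "\<lambda>l. l \<in> {x,y}" w] by auto
  have "w = alt x y (length u) @ v \<and> 0 < length u \<and> (v = [] \<or> (hd v \<noteq> x \<and> hd v \<noteq> y))"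
    using wuv ua u1 vv by simp
  then show ?thesis by blast
qed

lemma pfx: "w = x @ y \<Longrightarrow> \<exists>zs. rd (map h w) = rd (map h x) @ zs"
proof -
  assume "w = x @ y"
  then show ?thesis
  proof (cases "x = []")
    case False then show ?thesis using \<open>w = x @ y\<close> remdups_adj_append''[of "map h x" "map h y"] by auto
  qed simp
qed

lemma nth_common: "Z = p @ zs \<Longrightarrow> Z = q @ zs' \<Longrightarrow> k < length p \<Longrightarrow> k < length q \<Longrightarrow> p ! k = q ! k"
  by (metis nth_append)

lemmas dsimp = distinct_adj_append_iff distinct_adj_alt last_alt

lemma nth_alt_app: "k < n \<Longrightarrow> (alt x y n @ ys) ! k = (if even k then x else y)"
  by (simp add: nth_append nth_alt)
lemma nth_alt_app2: "(alt x y n @ ys) ! (n + k) = ys ! k"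
  by (simp add: nth_append)

lemma prefix_P:
  assumes da: "distinct_adj w" and e12: "rd (map h1 w) = rd (map h2 w)" and e23: "rd (map h2 w) = rd (map h3 w)"
    and ws: "w = X00 # X01 # t"
  shows "\<exists>i r. w = pw i @ r"
proof -
  define Z where "Z = rd (map h1 w)"
  have Z2: "rd (map h2 w) = Z" and Z3: "rd (map h3 w) = Z" using e12 e23 by (auto simp: Z_def)
  obtain k v where w0: "w = alt X00 X01 k @ v" "0 < k" "v = [] \<or> (hd v \<noteq> X00 \<and> hd v \<noteq> X01)"
    using split_alt[OF da, of X00 X01] ws by auto
  have k2: "2 \<le> k"
  proof (rule ccontr)
    assume "\<not> 2 \<le> k" then have "k = 1" using w0 by simp
    then show False using w0 ws by (cases v) (auto simp: alt.simps(2))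
  qed
  have "v \<noteq> []"
  proof
    assume "v = []"
    then have "Z = alt XL XM k" using Z_def w0 by simp
    moreover have "Z = [XL]" using Z2 w0 \<open>v = []\<close> k2 by (simp add: remdups_adj_replicate)
    ultimately show False using k2 by (metis length_alt length_Cons list.size(3) numeral_le_one_iff semiring_norm(69) One_nat_def)
  qed
  then obtain x v' where v: "v = x # v'" by (cases v) auto
  have L1: "(alt XL XM k @ [XR]) ! 1 = XM" using k2 by (simp add: nth_alt_app)
  have "x \<noteq> X11"
  proof
    assume "x = X11"
    obtain zs1 where 1: "Z = rd (map h1 (alt X00 X01 k @ [X11])) @ zs1"
      using pfx[of w "alt X00 X01 k @ [X11]" v' h1] w0 v \<open>x = X11\<close> Z_def by auto
    obtain zs2 where 2: "Z = rd (map h2 (alt X00 X01 k @ [X11])) @ zs2"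
      using pfx[of w "alt X00 X01 k @ [X11]" v' h2] w0 v \<open>x = X11\<close> Z2 by auto
    have r1: "rd (map h1 (alt X00 X01 k @ [X11])) = alt XL XM k @ [XR]"
      using k2 by (subst rd_id; simp add: dsimp)
    have r2: "rd (map h2 (alt X00 X01 k @ [X11])) = [XL, XR]"
      using k2 by (simp add: rd_rep_front)
    show False using nth_common[OF 1 2, of 1] r1 r2 L1 k2 by simp
  qed
  with w0 v have xc: "x = X10" by (cases x) auto
  obtain zs1 where P1: "Z = (alt XL XM k @ [XR]) @ zs1"
  proof -
    obtain zs1 where 1: "Z = rd (map h1 (alt X00 X01 k @ [X10])) @ zs1"
      using pfx[of w "alt X00 X01 k @ [X10]" v' h1] w0 v xc Z_def by auto
    have r1: "rd (map h1 (alt X00 X01 k @ [X10])) = alt XL XM k @ [XR]"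
      using k2 by (subst rd_id; simp add: dsimp)
    show ?thesis using that 1 r1 by simp
  qed
  have ek: "even k"
  proof (rule ccontr)
    assume odd: "\<not> even k"
    obtain zs3 where 3: "Z = rd (map h3 (alt X00 X01 k @ [X10])) @ zs3"
      using pfx[of w "alt X00 X01 k @ [X10]" v' h3] w0 v xc Z3 by auto
    have r3: "rd (map h3 (alt X00 X01 k @ [X10])) = alt XL XM k @ [XM]"
      using k2 odd by (subst rd_id; simp add: dsimp)
    show False using nth_common[OF P1 3, of k] r3 by (simp add: nth_append)
  qed
  obtain m v2 where w1: "v = alt X10 X01 m @ v2" "0 < m" "v2 = [] \<or> (hd v2 \<noteq> X10 \<and> hd v2 \<noteq> X01)"
    using split_alt[of v X10 X01] da w0 v xc by auto
  have lastM: "last (alt XL XM k) = XM" using ek k2 by (simp add: last_alt)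
  have h3a: "rd (alt XL XM k @ replicate m XM @ ys) = rd (alt XL XM k @ ys)" for ys
    using k2 lastM by (intro rd_absorb_mid) auto
  have "v2 \<noteq> []"
  proof
    assume "v2 = []"
    then have "Z = rd (alt XL XM k)" using Z3 w0 w1 h3a[of "[]"] by simp
    then have "length Z = k" by simp
    moreover have "length Z \<ge> k + 1" using P1 by simp
    ultimately show False by simp
  qed
  then obtain y v3 where v2: "v2 = y # v3" by (cases v2) auto
  have "y \<noteq> X00"
  proof
    assume "y = X00"
    obtain zs3 where 3: "Z = rd (map h3 (alt X00 X01 k @ alt X10 X01 m @ [X00])) @ zs3"
      using pfx[of w "alt X00 X01 k @ alt X10 X01 m @ [X00]" v3 h3] w0 w1 v2 \<open>y = X00\<close> Z3 by auto
    have "rd (map h3 (alt X00 X01 k @ alt X10 X01 m @ [X00])) = rd (alt XL XM k @ [XL])"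
      using h3a[of "[XL]"] by simp
    also have "\<dots> = alt XL XM k @ [XL]" using k2 lastM by (subst rd_id; simp add: dsimp)
    finally show False using nth_common[OF P1 3, of k] by (simp add: nth_append)
  qed
  with w1 v2 have yd: "y = X11" by (cases y) auto
  have km: "k = Suc m"
  proof -
    obtain zs2 where 2: "Z = rd (map h2 (alt X00 X01 k @ alt X10 X01 m @ [X11])) @ zs2"
      using pfx[of w "alt X00 X01 k @ alt X10 X01 m @ [X11]" v3 h2] w0 w1 v2 yd Z2 by auto
    have "rd (map h2 (alt X00 X01 k @ alt X10 X01 m @ [X11])) = rd (XL # alt XM XL m @ [XR])"
      using k2 by (simp add: rd_rep_front)
    also have "\<dots> = alt XL XM (Suc m) @ [XR]"
      by (subst alt_Cons[symmetric], subst append_Cons[symmetric], intro rd_id) (simp add: dsimp alt_Cons)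
    finally have 2: "Z = (alt XL XM (Suc m) @ [XR]) @ zs2" using 2 by simp
    show ?thesis
    proof (rule ccontr)
      assume "k \<noteq> Suc m"
      then consider "Suc m < k" | "k < Suc m" by linarith
      then show False
      proof cases
        case 1
        then show False using nth_common[OF P1 2, of "Suc m"] by (simp add: nth_append nth_alt split: if_splits)
      next
        case 2
        then show False using nth_common[OF P1 \<open>Z = (alt XL XM (Suc m) @ [XR]) @ zs2\<close>, of k] ek
          by (simp add: nth_append nth_alt)
      qed
    qed
  qed
  obtain r v4 where w2: "v2 = alt X11 X10 r @ v4" "0 < r" "v4 = [] \<or> (hd v4 \<noteq> X11 \<and> hd v4 \<noteq> X10)"
    using split_alt[of v2 X11 X10] da w0 w1 v2 yd by auto
  obtain zs4 where P2: "Z = (alt XL XM k @ alt XR XM m) @ zs4"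
  proof -
    obtain zs1 where 1: "Z = rd (map h1 (alt X00 X01 k @ alt X10 X01 m)) @ zs1"
      using pfx[of w "alt X00 X01 k @ alt X10 X01 m" v2 h1] w0 w1 Z_def by auto
    have r1: "rd (map h1 (alt X00 X01 k @ alt X10 X01 m)) = alt XL XM k @ alt XR XM m"
      using k2 w1 lastM by (subst rd_id; simp add: dsimp)
    show ?thesis using that 1 r1 by simp
  qed
  have H2: "rd (map h2 (alt X00 X01 k @ alt X10 X01 m @ alt X11 X10 r @ ys)) = rd (alt XL XM k @ alt XR XM r @ map h2 ys)" for ys
  proof -
    have "rd (map h2 (alt X00 X01 k @ alt X10 X01 m @ alt X11 X10 r @ ys)) = rd (XL # alt XM XL m @ alt XR XM r @ map h2 ys)"
      using k2 by (simp add: rd_rep_front)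
    also have "XL # alt XM XL m @ alt XR XM r @ map h2 ys = alt XL XM k @ alt XR XM r @ map h2 ys"
      using km by (simp add: alt_Cons)
    finally show ?thesis .
  qed
  have rm: "m \<le> r"
  proof (rule ccontr)
    assume "\<not> m \<le> r"
    then have rm: "r < m" by simp
    show False
    proof (cases "v4 = []")
      case True
      then have "Z = rd (alt XL XM k @ alt XR XM r)" using Z2 w0 w1 w2 H2[of "[]"] by simp
      also have "\<dots> = alt XL XM k @ alt XR XM r" using k2 w2 lastM by (subst rd_id; simp add: dsimp)
      finally have "length Z = k + r" by simp
      moreover have "length Z \<ge> k + m" using P2 by simp
      ultimately show False using rm by simp
    next
      case False
      then obtain z v5 where v4: "v4 = z # v5" by (cases v4) auto
      have hz: "h2 z = XL" using w2 v4 by (cases z) auto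
      obtain zs2 where 2: "Z = rd (map h2 (alt X00 X01 k @ alt X10 X01 m @ alt X11 X10 r @ [z])) @ zs2"
        using pfx[of w "alt X00 X01 k @ alt X10 X01 m @ alt X11 X10 r @ [z]" v5 h2] w0 w1 w2 v4 Z2 by auto
      have "rd (map h2 (alt X00 X01 k @ alt X10 X01 m @ alt X11 X10 r @ [z])) = rd (alt XL XM k @ alt XR XM r @ [XL])"
        using H2[of "[z]"] hz by simp
      also have "\<dots> = alt XL XM k @ alt XR XM r @ [XL]"
        using k2 w2 lastM by (subst rd_id; auto simp: dsimp)
      finally have "Z = (alt XL XM k @ alt XR XM r @ [XL]) @ zs2" using 2 by simp
      from nth_common[OF P2 this, of "k + r"] rm show False
        by (simp add: nth_append nth_alt split: if_splits)
    qed
  qed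
  obtain j where "k = 2*j" using ek by (elim evenE)
  with k2 have ki: "k = 2*(j-1)+2" by simp
  define i where "i = j - 1"
  with ki have ki: "k = 2*i+2" by simp
  have mi: "m = 2*i+1" using km ki by simp
  have "alt X11 X10 r = alt X11 X10 m @ alt X10 X11 (r - m)"
    using alt_add[of X11 X10 m "r - m"] rm mi by simp
  then have "w = pw i @ (alt X10 X11 (r - m) @ v4)"
    using w0 w1 w2 ki mi by (simp add: pw_alt)
  then show ?thesis by blast
qed


lemma inj_sg: "inj sg" by (metis injI sg_sg)

lemma peel: "g \<in> R_set \<Longrightarrow> g @ r \<in> R_set \<Longrightarrow> last g # r \<in> R_set"
proof -
  assume gR: "g \<in> R_set" and wR: "g @ r \<in> R_set"
  have gne: "g \<noteq> []" using gR by (simp add: R_set_iff)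
  define D where "D h = rd (dropWhile (\<lambda>y. y = h (last g)) (map h r))" for h :: "X4 \<Rightarrow> X3"
  have split: "rd (map h (g @ r)) = rd (map h g) @ D h" for h
    using remdups_adj_append''[of "map h g" "map h r"] gne by (simp add: D_def last_map)
  have cons: "rd (map h (last g # r)) = h (last g) # D h" for h
    by (simp add: D_def remdups_adj_Cons')
  have l: "h (last g) = last (rd (map h g))" for h using gne by (simp add: last_map)
  from gR wR have "rd (map h1 g) = rd (map h2 g)" "rd (map h2 g) = rd (map h3 g)"
    "rd (map h1 (g @ r)) = rd (map h2 (g @ r))" "rd (map h2 (g @ r)) = rd (map h3 (g @ r))"
    by (auto simp: R_set_iff)
  then have "D h1 = D h2" "D h2 = D h3" "h1 (last g) = h2 (last g)" "h2 (last g) = h3 (last g)"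
    using split[of h1] split[of h2] split[of h3] l[of h1] l[of h2] l[of h3] by auto
  then show ?thesis unfolding R_set_iff cons by simp
qed

lemma hd_bad: "w \<in> R_set \<Longrightarrow> hd w = X00 \<or> hd w = X11"
proof -
  assume "w \<in> R_set"
  then have ne: "w \<noteq> []" and e: "rd (map h1 w) = rd (map h2 w)" "rd (map h2 w) = rd (map h3 w)"
    by (auto simp: R_set_iff)
  have "hd (rd (map h1 w)) = h1 (hd w)" "hd (rd (map h2 w)) = h2 (hd w)" using ne by (auto simp: hd_map)
  then have "h1 (hd w) = h2 (hd w)" using e by simp
  then show ?thesis by (cases "hd w") auto
qed

lemma second_bad:
  assumes "w \<in> R_set" "w = x # y # t" "(x = X00 \<and> y = X10) \<or> (x = X11 \<and> y = X01)"
  shows False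
proof -
  from assms(1) have e: "rd (map h1 w) = rd (map h2 w)" by (auto simp: R_set_iff)
  obtain z1 where 1: "rd (map h1 w) = rd (map h1 [x,y]) @ z1" using pfx[of w "[x,y]" t h1] assms by auto
  obtain z2 where 2: "rd (map h2 w) = rd (map h2 [x,y]) @ z2" using pfx[of w "[x,y]" t h2] assms by auto
  from 1 2 e have "rd (map h1 [x,y]) @ z1 = rd (map h2 [x,y]) @ z2" by simp
  with assms(3) show False by auto
qed

lemma AB_R: "[X00, X11] \<in> R_set" "[X11, X00] \<in> R_set" by (auto simp: R_set_iff)

lemma absorb_last: "xs \<noteq> [] \<Longrightarrow> rd (xs @ last xs # ys) = rd (xs @ ys)"
  using rd_absorb_mid[of xs "last xs" 1 ys] by simp

lemma gen_main: "distinct_adj w \<Longrightarrow> w \<in> R_set \<Longrightarrow> \<exists>u. u \<noteq> [] \<and> rd (evalY u) = rd w"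
proof (induction "length w" arbitrary: w rule: less_induct)
  case less
  have wne: "w \<noteq> []" using less.prems by (simp add: R_set_iff)
  have hw: "hd w = X00 \<or> hd w = X11" using hd_bad less.prems by blast
  have stepg: "\<exists>u. u \<noteq> [] \<and> rd (evalY u) = rd w"
    if w: "w = gen g @ r" and g4: "length (gen g) \<ge> 2" for g r
  proof -
    have "last (gen g) # r \<in> R_set" using peel[OF gen_R] less.prems(2) w by blast
    moreover have "distinct_adj (last (gen g) # r)"
    proof -
      have "distinct_adj (butlast (gen g) @ last (gen g) # r)" using less.prems(1) w
        by (metis append_butlast_last_id append_Cons append_assoc append_Nil gen_ne)
      then show ?thesis by (metis distinct_adj_appendD2)
    qed
    moreover have "length (last (gen g) # r) < length w" using w g4 by simp
    ultimately obtain u' where u': "u' \<noteq> []" "rd (evalY u') = rd (last (gen g) # r)"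
      using less.hyps by blast
    have "rd (gen g @ evalY u') = rd (gen g @ last (gen g) # r)"
      by (rule rd_app_cong) (simp_all add: u'(2))
    then have "rd (evalY (g # u')) = rd (gen g @ last (gen g) # r)" by (simp only: evalY_Cons)
    also have "\<dots> = rd w" using w absorb_last[of "gen g" r] by simp
    finally show ?thesis by blast
  qed
  have lp: "length (pw i) \<ge> 2" for i by (simp add: length_pw)
  have lq: "length (qw i) \<ge> 2" for i by (simp add: qw_alt)
  show ?case
  proof (cases w)
    case Nil then show ?thesis using wne by simp
  next
    case (Cons x w')
    show ?thesis
    proof (cases w')
      case Nil
      then have "w = [X00] \<or> w = [X11]" using hw Cons by auto
      then show ?thesis
      proof
        assume "w = [X00]" then show ?thesis by (rule_tac x="[A]" in exI) (simp add: evalY_def)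
      next
        assume "w = [X11]" then show ?thesis by (rule_tac x="[B]" in exI) (simp add: evalY_def)
      qed
    next
      case Cons2: (Cons y t)
      have dxy: "x \<noteq> y" using less.prems(1) Cons Cons2 by simp
      consider "x = X00" "y = X11" | "x = X00" "y = X01" | "x = X11" "y = X00" | "x = X11" "y = X10"
        | "x = X00" "y = X10" | "x = X11" "y = X01"
        using hw Cons Cons2 dxy by (cases x; cases y) auto
      then show ?thesis
      proof cases
        case 1
        then have "w = gen A @ (X11 # t)" using Cons Cons2 by simp
        then show ?thesis
        proof -
          have "X11 # t \<in> R_set" using peel[OF AB_R(1), of t] less.prems(2) Cons Cons2 1 by simp
          moreover have "distinct_adj (X11 # t)" using less.prems(1) Cons Cons2 1 by simp
          moreover have "length (X11 # t) < length w" using Cons Cons2 by simp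
          ultimately obtain u' where u': "u' \<noteq> []" "rd (evalY u') = rd (X11 # t)"
            using less.hyps by blast
          have "rd (evalY (A # u')) = rd ([X00] @ X11 # t)"
            using rd_app_cong[of "[X00]" "[X00]" "evalY u'" "X11 # t"] u'(2) by (simp only: evalY_Cons) simp
          then show ?thesis using Cons Cons2 1 by (metis append_Cons append_Nil list.distinct(1))
        qed
      next
        case 3
        have "X00 # t \<in> R_set" using peel[OF AB_R(2), of t] less.prems(2) Cons Cons2 3 by simp
        moreover have "distinct_adj (X00 # t)" using less.prems(1) Cons Cons2 3 by simp
        moreover have "length (X00 # t) < length w" using Cons Cons2 by simp
        ultimately obtain u' where u': "u' \<noteq> []" "rd (evalY u') = rd (X00 # t)"
          using less.hyps by blast
        have "rd (evalY (B # u')) = rd ([X11] @ X00 # t)"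
          using rd_app_cong[of "[X11]" "[X11]" "evalY u'" "X00 # t"] u'(2) by (simp only: evalY_Cons) simp
        then show ?thesis using Cons Cons2 3 by (metis append_Cons append_Nil list.distinct(1))
      next
        case 2
        have "\<exists>i r. w = pw i @ r"
          by (rule prefix_P[of w t]) (use less.prems 2 Cons Cons2 in \<open>auto simp: R_set_iff\<close>)
        then obtain i r where "w = gen (P i) @ r" by auto
        then show ?thesis using stepg[of "P i" r] lp[of i] by simp
      next
        case 4
        have "map sg w \<in> R_set" using R_sym less.prems(2) by blast
        moreover have "distinct_adj (map sg w)"
          using less.prems(1) inj_on_subset[OF inj_sg subset_UNIV] by (intro distinct_adj_mapI)
        ultimately have "\<exists>i r. map sg w = pw i @ r"
          by (intro prefix_P[of _ "map sg t"]) (use 4 Cons Cons2 in \<open>auto simp: R_set_iff\<close>)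
        then obtain i r where "map sg w = pw i @ r" by auto
        then have "map sg (map sg w) = map sg (pw i) @ map sg r" by simp
        then have "w = gen (Q i) @ map sg r" by (simp only: map_sg_sg sg_pw) simp
        then show ?thesis using stepg[of "Q i" "map sg r"] lq[of i] by simp
      next
        case 5 then show ?thesis using second_bad less.prems(2) Cons Cons2 by blast
      next
        case 6 then show ?thesis using second_bad less.prems(2) Cons Cons2 by blast
      qed
    qed
  qed
qed

lemma part2: "w \<in> R_set \<Longrightarrow> \<exists>u. u \<noteq> [] \<and> F_eq (evalY u) w"
proof -
  assume wR: "w \<in> R_set"
  have rr: "rd (rd w) = rd w" using distinct_adj_remdups_adj[of w] distinct_adj_altdef by blast
  have m: "rd (map h (rd w)) = rd (map h w)" for h by (rule rd_map_cong[OF rr])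
  have "rd w \<in> R_set" using wR unfolding R_set_iff m by simp
  then obtain u where "u \<noteq> []" "rd (evalY u) = rd (rd w)"
    using gen_main[OF distinct_adj_remdups_adj] by blast
  then show ?thesis using rr by (auto simp: pe_iff)
qed

lemma part3: "u \<noteq> [] \<Longrightarrow> v \<noteq> [] \<Longrightarrow> F_eq (evalY u) (evalY v) \<longleftrightarrow> pres_eq R_rels u v"
proof
  assume ne: "u \<noteq> []" "v \<noteq> []" and "F_eq (evalY u) (evalY v)"
  then have "rd (evalY u) = rd (evalY v)" by (simp add: pe_iff)
  moreover have "rd (evalY (norm u)) = rd (evalY u)" "rd (evalY (norm v)) = rd (evalY v)"
    using part3_rev[OF norm_pe[of u]] part3_rev[OF norm_pe[of v]] by (auto simp: pe_iff)
  ultimately have "norm u = norm v"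
    using E_inj[of "norm u" "norm v"] norm_nf[OF ne(1)] norm_nf[OF ne(2)] by (auto simp: nf_iff)
  then show "pres_eq R_rels u v"
    by (metis norm_pe pres_sym pres_trans)
next
  show "pres_eq R_rels u v \<Longrightarrow> F_eq (evalY u) (evalY v)" by (rule part3_rev)
qed

theorem lemma11p4:
  shows "(\<forall>u. u \<noteq> [] \<longrightarrow> evalY u \<in> R_set)
    \<and> (\<forall>w \<in> R_set. \<exists>u. u \<noteq> [] \<and> F_eq (evalY u) w)
    \<and> (\<forall>u v. u \<noteq> [] \<longrightarrow> v \<noteq> [] \<longrightarrow> (F_eq (evalY u) (evalY v) \<longleftrightarrow> pres_eq R_rels u v))
    \<and> (\<forall>u. u \<noteq> [] \<longrightarrow> (\<exists>!v. nf v \<and> pres_eq R_rels u v))"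
  using part1 part2 part3 part4 by blast


end
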